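(* Let $S=p_1,\ldots,p_n$ have independent entries uniform on $[0,1]$, and let $x=x_1x_2\ldots$ and $y=y_1y_2\ldots$ be two independent traces of $S$. Fix the deletion patterns of both traces, and consider two length-$w$ windows $x_{i},\ldots,x_{i+w-1}$ and $y_j,\ldots,y_{j+w-1}$. Let $q$ be the number of $t\in\{0,\ldots,w-1\}$ such that $x_{i+t}$ and $y_{j+t}$ originate from the same original position $k$ (i.e. both are flips of the same $p_k$), and let $r=w-q$. Then for every $\beta>0$, with probability taken over the randomness of $S$ and the coin flips (but not the deletions), $$\Pr\left[\left|\sum_{t=0}^{w-1}|x_{i+t}-y_{j+t}|-\left(\frac q3+\frac r2\right)\right|\ge\beta\right]\le2\exp\left(\frac{-2\beta^2}{w}\right).$$
   Context: A trace of $S=p_1,\ldots,p_n$ with deletion probability $\delta$: sample independent bits $t_k$ with $\Pr[t_k=1]=p_k$, delete each independently with probability $\delta$, and concatenate the surviving bits; each surviving bit thus originates from a specific original position $k$. *)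

theory Defs
  imports "HOL-Probability.Probability"
begin

text \<open>Joint distribution of the coin flips of two independent traces of S = p_0..p_(n-1).
  First sample p_k iid uniform on [0,1]; then, given p, sample independent bits
  omega (k, True) ~ Bernoulli(p_k) (flip of position k in trace x) and
  omega (k, False) ~ Bernoulli(p_k) (flip of position k in trace y).
  Positions are 0-indexed. Deletions are fixed and handled separately.\<close>

definition coins_dist :: "nat \<Rightarrow> ((nat \<times> bool) \<Rightarrow> bool) measure" where
  "coins_dist n =
     Giry_Monad.bind (PiM {..<n} (\<lambda>_. uniform_measure lborel {0..1::real}))
       (\<lambda>p. PiM ({..<n} \<times> UNIV) (\<lambda>kc. measure_pmf (bernoulli_pmf (p (fst kc)))))"

text \<open>Given the (fixed) set D of surviving original positions, the m-th bit (0-indexed)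
  of the trace originates from original position trace_origin D m.\<close>

definition trace_origin :: "nat set \<Rightarrow> nat \<Rightarrow> nat" where
  "trace_origin D m = sorted_list_of_set D ! m"

end

theory Submission
  imports Defs "HOL-Probability.Probability"
begin

definition pi2 :: "(bool \<times> bool) pmf" where
  "pi2 = map_pmf (\<lambda>(x,e). (x, x \<noteq> e)) (pair_pmf (bernoulli_pmf (1/2)) (bernoulli_pmf (1/3)))"

lemma xor_fair: "map_pmf (\<lambda>x. x \<noteq> e) (bernoulli_pmf (1/2)) = bernoulli_pmf (1/2)"
proof (rule pmf_eqI)
  fix y
  have "y = (\<lambda>x. x \<noteq> e) (y \<noteq> e)" by auto
  then have "pmf (map_pmf (\<lambda>x. x \<noteq> e) (bernoulli_pmf (1/2))) y = pmf (map_pmf (\<lambda>x. x \<noteq> e) (bernoulli_pmf (1/2))) ((\<lambda>x. x \<noteq> e) (y \<noteq> e))" by simp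
  also have "\<dots> = pmf (bernoulli_pmf (1/2)) (y \<noteq> e)"
    by (rule pmf_map_inj') (auto simp: inj_on_def)
  finally show "pmf (map_pmf (\<lambda>x. x \<noteq> e) (bernoulli_pmf (1/2))) y = pmf (bernoulli_pmf (1/2)) y" by simp
qed

lemma xor_fair': "map_pmf (\<lambda>x. e \<noteq> x) (bernoulli_pmf (1/2)) = bernoulli_pmf (1/2)"
  using xor_fair[of e] by (simp add: eq_commute)

lemma pi2_fst: "map_pmf fst pi2 = bernoulli_pmf (1/2)"
  unfolding pi2_def pmf.map_comp by (simp add: o_def case_prod_beta map_fst_pair_pmf)

lemma pi2_snd: "map_pmf snd pi2 = bernoulli_pmf (1/2)"
proof -
  have "map_pmf snd pi2 = pair_pmf (bernoulli_pmf (1/2)) (bernoulli_pmf (1/3)) \<bind> (\<lambda>z. return_pmf (fst z \<noteq> snd z))"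
    unfolding pi2_def pmf.map_comp by (simp add: map_pmf_def o_def case_prod_beta)
  also have "\<dots> = bernoulli_pmf (1/3) \<bind> (\<lambda>e. map_pmf (\<lambda>x. x \<noteq> e) (bernoulli_pmf (1/2)))"
    unfolding pair_pmf_def map_pmf_def
    by (subst bind_commute_pmf) (simp add: bind_assoc_pmf bind_return_pmf)
  also have "\<dots> = bernoulli_pmf (1/2)" unfolding xor_fair by (rule bind_pmf_const)
  finally show ?thesis .
qed

lemma pi2_diff: "map_pmf (\<lambda>y. fst y \<noteq> snd y) pi2 = bernoulli_pmf (1/3)"
proof -
  have e: "(\<lambda>x. fst x = (fst x = snd x)) = snd" by auto
  show ?thesis unfolding pi2_def pmf.map_comp by (simp add: o_def case_prod_beta e map_snd_pair_pmf)
qed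

lemma pmf_pi2: "pmf pi2 (x, y) = (if x = y then 1/3 else 1/6)"
proof -
  have e: "(x,y) = (\<lambda>(x,e). (x, x \<noteq> e)) (x, x \<noteq> y)" by auto
  have "pmf pi2 (x,y) = pmf (map_pmf (\<lambda>(x,e). (x, x \<noteq> e)) (pair_pmf (bernoulli_pmf (1/2)) (bernoulli_pmf (1/3)))) ((\<lambda>(x,e). (x, x \<noteq> e)) (x, x \<noteq> y))"
    unfolding pi2_def by (subst e) (rule refl)
  also have "\<dots> = pmf (pair_pmf (bernoulli_pmf (1/2)) (bernoulli_pmf (1/3))) (x, x \<noteq> y)"
    by (rule pmf_map_inj') (auto simp: inj_on_def)
  also have "\<dots> = (if x = y then 1/3 else 1/6)"
    by (auto simp: pmf_pair)
  finally show ?thesis .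
qed

lemma indep_step:
  assumes "\<And>f. map_pmf (h f) A = B"
  shows "map_pmf (\<lambda>(y,f). (h f y, G f)) (pair_pmf A P) = pair_pmf B (map_pmf G P)"
proof -
  have "map_pmf (\<lambda>(y,f). (h f y, G f)) (pair_pmf A P) = P \<bind> (\<lambda>f. map_pmf (\<lambda>z. (z, G f)) (map_pmf (h f) A))"
    unfolding pair_pmf_def map_pmf_def
    by (subst bind_commute_pmf) (simp add: bind_assoc_pmf bind_return_pmf)
  also have "\<dots> = P \<bind> (\<lambda>f. map_pmf (\<lambda>z. (z, G f)) B)" by (simp add: assms)
  also have "\<dots> = pair_pmf B (map_pmf G P)"
    unfolding pair_pmf_def map_pmf_def
    by (subst bind_commute_pmf) (simp add: bind_assoc_pmf bind_return_pmf)
  finally show ?thesis .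
qed

definition Zt :: "(nat \<Rightarrow> nat) \<Rightarrow> (nat \<Rightarrow> nat) \<Rightarrow> nat \<Rightarrow> (nat \<Rightarrow> bool \<times> bool) \<Rightarrow> bool" where
  "Zt a b t f = (fst (f (a t)) \<noteq> snd (f (b t)))"
definition Tv :: "(nat \<Rightarrow> nat) \<Rightarrow> (nat \<Rightarrow> nat) \<Rightarrow> nat \<Rightarrow> (nat \<Rightarrow> bool \<times> bool) \<Rightarrow> nat \<Rightarrow> bool" where
  "Tv a b w f = (\<lambda>t. if t < w then Zt a b t f else False)"
definition rho :: "(nat \<Rightarrow> nat) \<Rightarrow> (nat \<Rightarrow> nat) \<Rightarrow> nat \<Rightarrow> real" where
  "rho a b t = (if a t = b t then 1/3 else 1/2)"

lemma hmap:
  fixes c :: nat and f :: "nat \<Rightarrow> bool \<times> bool" and a b :: nat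
  assumes "c = max a b"
  shows "map_pmf (\<lambda>y. fst ((f(c:=y)) a) \<noteq> snd ((f(c:=y)) b)) pi2 = bernoulli_pmf (if a = b then 1/3 else 1/2)"
proof (cases a b rule: linorder_cases)
  case less
  then have "(\<lambda>y. fst ((f(c:=y)) a) \<noteq> snd ((f(c:=y)) b)) = (\<lambda>x. fst (f a) \<noteq> x) \<circ> snd"
    using assms by (auto simp: fun_eq_iff)
  then show ?thesis using less by (simp only: pmf.map_comp[symmetric] pi2_snd xor_fair') simp
next
  case equal
  then have "(\<lambda>y. fst ((f(c:=y)) a) \<noteq> snd ((f(c:=y)) b)) = (\<lambda>y. fst y \<noteq> snd y)"
    using assms by (auto simp: fun_eq_iff)
  then show ?thesis using equal by (simp only: pi2_diff) simp
next
  case greater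
  then have "(\<lambda>y. fst ((f(c:=y)) a) \<noteq> snd ((f(c:=y)) b)) = (\<lambda>x. x \<noteq> snd (f b)) \<circ> fst"
    using assms by (auto simp: fun_eq_iff)
  then show ?thesis using greater by (simp only: pmf.map_comp[symmetric] pi2_fst xor_fair) simp
qed

lemma peel:
  assumes "\<And>s t. s < t \<Longrightarrow> t < w \<Longrightarrow> a s < a t \<and> b s < b t"
    and "\<And>t. t < w \<Longrightarrow> a t < n \<and> b t < n"
  shows "map_pmf (Tv a b w) (Pi_pmf {..<n} (False,False) (\<lambda>_. pi2)) = Pi_pmf {..<w} False (\<lambda>t. bernoulli_pmf (rho a b t))"
  using assms
proof (induction w arbitrary: n)
  case 0
  have "Tv a b 0 = (\<lambda>_ _. False)" by (auto simp: Tv_def fun_eq_iff)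
  then show ?case by simp
next
  case (Suc w)
  define k0 where "k0 = max (a w) (b w)"
  have k0n: "k0 < n" using Suc.prems(2)[of w] by (auto simp: k0_def)
  define N' where "N' = {..<n} - {k0}"
  define P where "P = Pi_pmf N' (False,False) (\<lambda>_. pi2)"
  have Nins: "{..<n} = insert k0 N'" using k0n by (auto simp: N'_def)
  have Qeq: "Pi_pmf {..<n} (False,False) (\<lambda>_. pi2) = map_pmf (\<lambda>(y,f). f(k0:=y)) (pair_pmf pi2 P)"
    unfolding P_def Nins by (rule Pi_pmf_insert) (auto simp: N'_def)
  have Tinv: "Tv a b w (f(k0:=y)) = Tv a b w f" for f y
  proof -
    have "t < w \<Longrightarrow> a t \<noteq> k0 \<and> b t \<noteq> k0" for t
      using Suc.prems(1)[of t w] by (auto simp: k0_def)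
    then show ?thesis by (auto simp: Tv_def Zt_def fun_eq_iff)
  qed
  have IH: "map_pmf (Tv a b w) (Pi_pmf {..<n} (False,False) (\<lambda>_. pi2)) = Pi_pmf {..<w} False (\<lambda>t. bernoulli_pmf (rho a b t))"
    using Suc.prems by (intro Suc.IH) auto
  have TP: "map_pmf (Tv a b w) (Pi_pmf {..<n} (False,False) (\<lambda>_. pi2)) = map_pmf (Tv a b w) P"
  proof -
    have "map_pmf (Tv a b w) (Pi_pmf {..<n} (False,False) (\<lambda>_. pi2)) = map_pmf (\<lambda>x. Tv a b w (snd x)) (pair_pmf pi2 P)"
      unfolding Qeq pmf.map_comp by (simp add: o_def case_prod_beta Tinv)
    also have "\<dots> = map_pmf (Tv a b w) (map_pmf snd (pair_pmf pi2 P))"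
      unfolding pmf.map_comp by (simp add: o_def case_prod_beta)
    finally show ?thesis by (simp add: map_snd_pair_pmf)
  qed
  have joint: "map_pmf (\<lambda>g. (Zt a b w g, Tv a b w g)) (Pi_pmf {..<n} (False,False) (\<lambda>_. pi2))
      = pair_pmf (bernoulli_pmf (rho a b w)) (map_pmf (Tv a b w) P)"
  proof -
    have "map_pmf (\<lambda>g. (Zt a b w g, Tv a b w g)) (Pi_pmf {..<n} (False,False) (\<lambda>_. pi2))
       = map_pmf (\<lambda>(y,f). ((\<lambda>f y. fst ((f(k0:=y)) (a w)) \<noteq> snd ((f(k0:=y)) (b w))) f y, Tv a b w f)) (pair_pmf pi2 P)"
      unfolding Qeq pmf.map_comp by (intro map_pmf_cong refl) (auto simp: Tinv Zt_def)
    also have "\<dots> = pair_pmf (bernoulli_pmf (rho a b w)) (map_pmf (Tv a b w) P)"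
      by (rule indep_step) (simp only: hmap[OF k0_def] rho_def)
    finally show ?thesis .
  qed
  have TS: "Tv a b (Suc w) g = (Tv a b w g)(w := Zt a b w g)" for g
    by (auto simp: Tv_def fun_eq_iff)
  have "map_pmf (Tv a b (Suc w)) (Pi_pmf {..<n} (False,False) (\<lambda>_. pi2))
      = map_pmf (\<lambda>(z,F). F(w:=z)) (map_pmf (\<lambda>g. (Zt a b w g, Tv a b w g)) (Pi_pmf {..<n} (False,False) (\<lambda>_. pi2)))"
    unfolding pmf.map_comp by (intro map_pmf_cong refl) (simp add: TS)
  also have "\<dots> = map_pmf (\<lambda>(z,F). F(w:=z)) (pair_pmf (bernoulli_pmf (rho a b w)) (Pi_pmf {..<w} False (\<lambda>t. bernoulli_pmf (rho a b t))))"
    unfolding joint TP[symmetric] IH ..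
  also have "\<dots> = Pi_pmf (insert w {..<w}) False (\<lambda>t. bernoulli_pmf (rho a b t))"
    by (rule Pi_pmf_insert[symmetric]) auto
  also have "insert w {..<w} = {..<Suc w}" by auto
  finally show ?case .
qed

lemma hoeff_pi:
  fixes \<rho> :: "nat \<Rightarrow> real"
  assumes w: "w > 0" and \<beta>: "\<beta> \<ge> 0" and r: "\<And>t. 0 \<le> \<rho> t \<and> \<rho> t \<le> 1"
  shows "measure_pmf.prob (Pi_pmf {..<w} False (\<lambda>t. bernoulli_pmf (\<rho> t)))
     {z. \<bar>(\<Sum>t<w. of_bool (z t) :: real) - (\<Sum>t<w. \<rho> t)\<bar> \<ge> \<beta>} \<le> 2 * exp (-2 * \<beta>^2 / real w)"
proof -
  let ?M = "measure_pmf (Pi_pmf {..<w} False (\<lambda>t. bernoulli_pmf (\<rho> t)))"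
  interpret H: Hoeffding_ineq ?M "{..<w}" "\<lambda>t z. of_bool (z t) :: real" "\<lambda>_. 0" "\<lambda>_. 1"
    "\<Sum>t<w. measure_pmf.expectation (Pi_pmf {..<w} False (\<lambda>t. bernoulli_pmf (\<rho> t))) (\<lambda>z. of_bool (z t) :: real)"
  proof unfold_locales
    show "prob_space.indep_vars ?M (\<lambda>_. borel) (\<lambda>t z. of_bool (z t) :: real) {..<w}"
      by (rule prob_space.indep_vars_compose2[OF measure_pmf.prob_space_axioms indep_vars_Pi_pmf[of "{..<w}"]])
         auto
  qed auto
  have E: "measure_pmf.expectation (Pi_pmf {..<w} False (\<lambda>t. bernoulli_pmf (\<rho> t))) (\<lambda>z. of_bool (z t) :: real) = \<rho> t"
    if "t < w" for t
  proof -
    have "measure_pmf.expectation (Pi_pmf {..<w} False (\<lambda>t. bernoulli_pmf (\<rho> t))) (\<lambda>z. of_bool (z t) :: real)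
       = measure_pmf.expectation (map_pmf (\<lambda>z. z t) (Pi_pmf {..<w} False (\<lambda>t. bernoulli_pmf (\<rho> t)))) (\<lambda>b. of_bool b :: real)"
      by simp
    also have "\<dots> = \<rho> t" using that r[of t] by (subst Pi_pmf_component) auto
    finally show ?thesis .
  qed
  have "measure ?M {x \<in> space ?M. \<bar>(\<Sum>t<w. of_bool (x t) :: real) - (\<Sum>t<w. measure_pmf.expectation (Pi_pmf {..<w} False (\<lambda>t. bernoulli_pmf (\<rho> t))) (\<lambda>z. of_bool (z t) :: real))\<bar> \<ge> \<beta>}
      \<le> 2 * exp (-2 * \<beta>\<^sup>2 / (\<Sum>i<w. (1 - 0)\<^sup>2))"
    by (rule H.Hoeffding_ineq_abs_ge[OF \<beta>]) (use w in simp)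
  then show ?thesis using E by simp
qed

context begin
interpretation pmf_as_function .
lemma pmf_bernoulli_gen: "pmf (bernoulli_pmf x) b = (if b then min 1 (max 0 x) else 1 - min 1 (max 0 x))"
  by transfer simp
end

lemma hi_ftc:
  fixes F f :: "real \<Rightarrow> real"
  assumes "\<And>x. (F has_real_derivative f x) (at x)"
  shows "(f has_integral (F 1 - F 0)) {0..1}"
  by (rule fundamental_theorem_of_calculus)
     (auto intro: has_field_derivative_at_within[OF assms] simp: has_real_derivative_iff_has_vector_derivative[symmetric])

lemma poly_int:
  "((\<lambda>x::real. (if b then x else 1 - x) * (if c then x else 1 - x)) has_integral (if b = c then 1/3 else 1/6)) {0..1}"
proof -
  consider "b" "c" | "\<not>b" "\<not>c" | "b" "\<not>c" | "\<not>b" "c" by blast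
  then show ?thesis
  proof cases
    case 1
    have "((\<lambda>x::real. x * x) has_integral ((\<lambda>x. x^3/3) 1 - (\<lambda>x. x^3/3) 0)) {0..1}"
      by (rule hi_ftc) (auto intro!: derivative_eq_intros simp: power2_eq_square)
    then show ?thesis using 1 by simp
  next
    case 2
    have "((\<lambda>x::real. (1-x) * (1-x)) has_integral ((\<lambda>x. -((1-x)^3/3)) 1 - (\<lambda>x. -((1-x)^3/3)) 0)) {0..1}"
      by (rule hi_ftc) (auto intro!: derivative_eq_intros simp: power2_eq_square)
    then show ?thesis using 2 by simp
  next
    case 3
    have "((\<lambda>x::real. x * (1-x)) has_integral ((\<lambda>x. x^2/2 - x^3/3) 1 - (\<lambda>x. x^2/2 - x^3/3) 0)) {0..1}"
      by (rule hi_ftc) (auto intro!: derivative_eq_intros simp: power2_eq_square algebra_simps)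
    then show ?thesis using 3 by simp
  next
    case 4
    have "((\<lambda>x::real. (1-x) * x) has_integral ((\<lambda>x. x^2/2 - x^3/3) 1 - (\<lambda>x. x^2/2 - x^3/3) 0)) {0..1}"
      by (rule hi_ftc) (auto intro!: derivative_eq_intros simp: power2_eq_square algebra_simps)
    then show ?thesis using 4 by simp
  qed
qed

lemma nn_int_U:
  "(\<integral>\<^sup>+x. ennreal (pmf (bernoulli_pmf x) b) * ennreal (pmf (bernoulli_pmf x) c) \<partial>uniform_measure lborel {0..1::real})
     = ennreal (if b = c then 1/3 else 1/6)"
proof -
  let ?h = "\<lambda>x::real. (if b then x else 1 - x) * (if c then x else 1 - x)"
  have "(\<integral>\<^sup>+x. ennreal (pmf (bernoulli_pmf x) b) * ennreal (pmf (bernoulli_pmf x) c) \<partial>uniform_measure lborel {0..1::real})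
     = (\<integral>\<^sup>+x. ennreal (pmf (bernoulli_pmf x) b) * ennreal (pmf (bernoulli_pmf x) c) * indicator {0..1} x \<partial>lborel) / emeasure lborel {0..1::real}"
    by (rule nn_integral_uniform_measure) (auto simp: pmf_bernoulli_gen)
  also have "emeasure lborel {0..1::real} = 1" by simp
  also have "(\<integral>\<^sup>+x. ennreal (pmf (bernoulli_pmf x) b) * ennreal (pmf (bernoulli_pmf x) c) * indicator {0..1} x \<partial>lborel)
      = (\<integral>\<^sup>+x. ennreal (if x \<in> {0..1} then ?h x else 0) \<partial>lborel)"
    by (intro nn_integral_cong) (auto simp: indicator_def ennreal_mult'[symmetric])
  also have "\<dots> = ennreal (if b = c then 1/3 else 1/6)"
  proof (rule nn_integral_has_integral_lborel)
    show "((\<lambda>x. if x \<in> {0..1} then ?h x else 0) has_integral (if b = c then 1/3 else 1/6)) UNIV"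
      using poly_int[of b c] by (subst has_integral_restrict_UNIV)
    show "0 \<le> (if x \<in> {0..1} then ?h x else 0)" for x by auto
  qed auto
  finally show ?thesis by (simp add: divide_ennreal_def)
qed

definition Nk :: "nat \<Rightarrow> (nat \<Rightarrow> real) \<Rightarrow> ((nat \<times> bool) \<Rightarrow> bool) measure" where
  "Nk n p = PiM ({..<n} \<times> UNIV) (\<lambda>kc. measure_pmf (bernoulli_pmf (p (fst kc))))"
definition Kn :: "nat \<Rightarrow> ((nat \<times> bool) \<Rightarrow> bool) measure" where
  "Kn n = PiM ({..<n} \<times> UNIV) (\<lambda>_. count_space UNIV)"

lemma sets_Nk: "sets (Nk n p) = sets (Kn n)"
  unfolding Nk_def Kn_def by (rule sets_PiM_cong) auto

lemma space_Kn: "space (Kn n) = PiE ({..<n} \<times> UNIV) (\<lambda>_. UNIV)"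
  unfolding Kn_def by (simp add: space_PiM)

lemma finite_space_Kn: "finite (space (Kn n))"
  unfolding space_Kn by (rule finite_PiE) auto

lemma single_Kn: "\<omega> \<in> space (Kn n) \<Longrightarrow> PiE ({..<n} \<times> UNIV) (\<lambda>i. {\<omega> i}) = {\<omega>}"
  by (rule PiE_singleton) (auto simp: space_Kn PiE_def)

lemma sets_Kn: "X \<subseteq> space (Kn n) \<Longrightarrow> X \<in> sets (Kn n)"
proof -
  assume X: "X \<subseteq> space (Kn n)"
  then have fin: "finite X" using finite_space_Kn finite_subset by blast
  have eq: "PiE ({..<n} \<times> UNIV) (\<lambda>i. {\<omega> i}) = {\<omega>}" if "\<omega> \<in> X" for \<omega>
    using that X by (intro single_Kn) auto
  have "(\<Union>\<omega>\<in>X. PiE ({..<n} \<times> UNIV) (\<lambda>i. {\<omega> i})) = (\<Union>\<omega>\<in>X. {\<omega>})"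
    by (rule SUP_cong[OF refl]) (rule eq)
  then have "X = (\<Union>\<omega>\<in>X. PiE ({..<n} \<times> UNIV) (\<lambda>i. {\<omega> i}))" by simp
  also have "\<dots> \<in> sets (Kn n)"
    using fin unfolding Kn_def by (intro sets.finite_UN sets_PiM_I_finite) auto
  finally show ?thesis .
qed

lemma emeasure_Nk_single:
  assumes "\<omega> \<in> space (Kn n)"
  shows "emeasure (Nk n p) {\<omega>} = (\<Prod>kc\<in>{..<n} \<times> UNIV. ennreal (pmf (bernoulli_pmf (p (fst kc))) (\<omega> kc)))"
proof -
  interpret product_sigma_finite "\<lambda>kc. measure_pmf (bernoulli_pmf (p (fst kc)))"
    by (simp add: product_sigma_finite_def measure_pmf.sigma_finite_measure_axioms)
  have "emeasure (Nk n p) {\<omega>} = emeasure (Nk n p) (PiE ({..<n} \<times> UNIV) (\<lambda>i. {\<omega> i}))"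
    using single_Kn[OF assms] by simp
  also have "\<dots> = (\<Prod>kc\<in>{..<n} \<times> UNIV. emeasure (measure_pmf (bernoulli_pmf (p (fst kc)))) {\<omega> kc})"
    unfolding Nk_def by (rule emeasure_PiM) auto
  finally show ?thesis by (simp add: emeasure_pmf_single)
qed

lemma emeasure_Nk:
  assumes "X \<subseteq> space (Kn n)"
  shows "emeasure (Nk n p) X = (\<Sum>\<omega>\<in>X. \<Prod>kc\<in>{..<n} \<times> UNIV. ennreal (pmf (bernoulli_pmf (p (fst kc))) (\<omega> kc)))"
proof -
  have fin: "finite X" using assms finite_space_Kn finite_subset by blast
  have "emeasure (Nk n p) X = (\<Sum>\<omega>\<in>X. emeasure (Nk n p) {\<omega>})"
    using assms fin by (intro emeasure_eq_sum_singleton) (auto simp: sets_Nk intro!: sets_Kn)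
  also have "\<dots> = (\<Sum>\<omega>\<in>X. \<Prod>kc\<in>{..<n} \<times> UNIV. ennreal (pmf (bernoulli_pmf (p (fst kc))) (\<omega> kc)))"
    using assms by (intro sum.cong refl emeasure_Nk_single) auto
  finally show ?thesis .
qed

abbreviation U :: "real measure" where "U \<equiv> uniform_measure lborel {0..1::real}"

lemma prob_U: "prob_space U"
  by (rule prob_space_uniform_measure) auto

lemma prob_PU: "prob_space (PiM {..<n} (\<lambda>_. U))"
  by (rule prob_space_PiM) (rule prob_U)

lemma meas_bern:
  assumes "k < n"
  shows "(\<lambda>p. ennreal (pmf (bernoulli_pmf (p k)) b)) \<in> borel_measurable (PiM {..<n} (\<lambda>_. U))"
proof -
  have "(\<lambda>p. p k) \<in> measurable (PiM {..<n} (\<lambda>_. U)) U"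
    using assms by (intro measurable_component_singleton) auto
  then have pk: "(\<lambda>p. p k) \<in> borel_measurable (PiM {..<n} (\<lambda>_. U))"
    by (simp add: measurable_cong_sets[OF refl sets_uniform_measure])
  have h: "(\<lambda>p. min 1 (max 0 (p k))) \<in> borel_measurable (PiM {..<n} (\<lambda>_. U))"
    by (intro borel_measurable_min borel_measurable_max pk borel_measurable_const)
  have "(\<lambda>p. if b then min 1 (max 0 (p k)) else 1 - min 1 (max 0 (p k))) \<in> borel_measurable (PiM {..<n} (\<lambda>_. U))"
    by (cases b) (simp_all add: h borel_measurable_diff[OF borel_measurable_const h])
  from measurable_compose[OF this measurable_ennreal] show ?thesis
    by (simp add: pmf_bernoulli_gen o_def)
qed

lemma Nk_meas: "Nk n \<in> measurable (PiM {..<n} (\<lambda>_. U)) (subprob_algebra (Kn n))"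
proof (rule measurable_subprob_algebra)
  fix p
  show "subprob_space (Nk n p)"
    unfolding Nk_def by (intro prob_space_imp_subprob_space prob_space_PiM measure_pmf.prob_space_axioms)
  show "sets (Nk n p) = sets (Kn n)" by (rule sets_Nk)
next
  fix X assume "X \<in> sets (Kn n)"
  then have X: "X \<subseteq> space (Kn n)" by (rule sets.sets_into_space)
  show "(\<lambda>p. emeasure (Nk n p) X) \<in> borel_measurable (PiM {..<n} (\<lambda>_. U))"
    unfolding emeasure_Nk[OF X]
    by (intro borel_measurable_sum borel_measurable_prod_ennreal meas_bern) auto
qed

lemma prod_bool_split:
  "(\<Prod>kc\<in>{..<n} \<times> (UNIV::bool set). (g kc :: ennreal)) = (\<Prod>k<n. g (k,True) * g (k,False))"
proof -
  have "(\<Prod>k<n. \<Prod>c\<in>(UNIV::bool set). g (k,c)) = (\<Prod>(k,c)\<in>{..<n} \<times> (UNIV::bool set). g (k,c))"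
    by (rule prod.cartesian_product)
  then have "(\<Prod>kc\<in>{..<n} \<times> (UNIV::bool set). g kc) = (\<Prod>k<n. \<Prod>c\<in>(UNIV::bool set). g (k,c))"
    by simp
  also have "\<dots> = (\<Prod>k<n. g (k,True) * g (k,False))"
    by (intro prod.cong refl) (simp add: UNIV_bool mult.commute)
  finally show ?thesis .
qed

lemma coins_single:
  assumes "\<omega> \<in> space (Kn n)"
  shows "emeasure (coins_dist n) {\<omega>} = ennreal (\<Prod>k<n. if \<omega> (k,True) = \<omega> (k,False) then 1/3 else 1/6)"
proof -
  interpret PU: product_sigma_finite "\<lambda>_::nat. U"
    using prob_U by (simp add: product_sigma_finite_def prob_space_imp_sigma_finite)
  have cd: "coins_dist n = PiM {..<n} (\<lambda>_. U) \<bind> Nk n"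
    by (unfold coins_dist_def Nk_def[abs_def]) (rule refl)
  have ne: "space (PiM {..<n} (\<lambda>_. U)) \<noteq> {}"
    using prob_space.not_empty[OF prob_PU] .
  have "emeasure (coins_dist n) {\<omega>} = (\<integral>\<^sup>+p. emeasure (Nk n p) {\<omega>} \<partial>PiM {..<n} (\<lambda>_. U))"
    unfolding cd using assms by (intro emeasure_bind[OF ne Nk_meas] sets_Kn) auto
  also have "\<dots> = (\<integral>\<^sup>+p. (\<Prod>k\<in>{..<n}. (\<lambda>k x. ennreal (pmf (bernoulli_pmf x) (\<omega> (k,True))) * ennreal (pmf (bernoulli_pmf x) (\<omega> (k,False)))) k (p k)) \<partial>PiM {..<n} (\<lambda>_. U))"
    by (intro nn_integral_cong) (simp add: emeasure_Nk_single[OF assms] prod_bool_split)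
  also have "\<dots> = (\<Prod>k\<in>{..<n}. \<integral>\<^sup>+x. ennreal (pmf (bernoulli_pmf x) (\<omega> (k,True))) * ennreal (pmf (bernoulli_pmf x) (\<omega> (k,False))) \<partial>U)"
    by (rule PU.product_nn_integral_prod) (auto simp: pmf_bernoulli_gen)
  also have "\<dots> = (\<Prod>k<n. ennreal (if \<omega> (k,True) = \<omega> (k,False) then 1/3 else 1/6))"
    by (simp only: nn_int_U)
  also have "\<dots> = ennreal (\<Prod>k<n. if \<omega> (k,True) = \<omega> (k,False) then 1/3 else 1/6)"
    by (rule prod_ennreal) auto
  finally show ?thesis .
qed

lemma sets_coins: "sets (coins_dist n) = sets (Kn n)"
proof -
  have cd: "coins_dist n = PiM {..<n} (\<lambda>_. U) \<bind> Nk n"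
    by (unfold coins_dist_def Nk_def[abs_def]) (rule refl)
  show ?thesis unfolding cd
    by (rule sets_bind[OF sets_Nk prob_space.not_empty[OF prob_PU]])
qed

lemma space_coins: "space (coins_dist n) = space (Kn n)"
  using sets_coins by (rule sets_eq_imp_space_eq)

definition Wt :: "nat \<Rightarrow> ((nat \<times> bool) \<Rightarrow> bool) \<Rightarrow> real" where
  "Wt n \<omega> = (\<Prod>k<n. if \<omega> (k,True) = \<omega> (k,False) then 1/3 else 1/6)"

lemma measure_coins:
  assumes "X \<subseteq> space (Kn n)"
  shows "measure (coins_dist n) X = (\<Sum>\<omega>\<in>X. Wt n \<omega>)"
proof -
  have fin: "finite X" using assms finite_space_Kn finite_subset by blast
  have "emeasure (coins_dist n) X = (\<Sum>\<omega>\<in>X. emeasure (coins_dist n) {\<omega>})"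
    using assms fin by (intro emeasure_eq_sum_singleton) (auto simp: sets_coins intro!: sets_Kn)
  also have "\<dots> = (\<Sum>\<omega>\<in>X. ennreal (Wt n \<omega>))"
    using assms by (intro sum.cong refl) (auto simp: coins_single Wt_def)
  also have "\<dots> = ennreal (\<Sum>\<omega>\<in>X. Wt n \<omega>)"
    by (rule sum_ennreal) (auto simp: Wt_def intro!: prod_nonneg)
  finally show ?thesis
    by (simp add: measure_def sum_nonneg Wt_def prod_nonneg)
qed

definition Rm :: "nat \<Rightarrow> (nat \<Rightarrow> bool \<times> bool) \<Rightarrow> (nat \<times> bool) \<Rightarrow> bool" where
  "Rm n f = restrict (\<lambda>kc. if snd kc then fst (f (fst kc)) else snd (f (fst kc))) ({..<n} \<times> UNIV)"

lemma bij_Rm: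
  "bij_betw (Rm n) (PiE_dflt {..<n} (False,False) (\<lambda>_. UNIV)) (space (Kn n))"
proof (rule bij_betw_imageI)
  show "inj_on (Rm n) (PiE_dflt {..<n} (False,False) (\<lambda>_. UNIV))"
  proof (rule inj_onI)
    fix f g assume f: "f \<in> PiE_dflt {..<n} (False,False) (\<lambda>_. UNIV)" and g: "g \<in> PiE_dflt {..<n} (False,False) (\<lambda>_. UNIV)"
      and eq: "Rm n f = Rm n g"
    show "f = g"
    proof
      fix k show "f k = g k"
      proof (cases "k < n")
        case True
        have "Rm n f (k,True) = Rm n g (k,True)" "Rm n f (k,False) = Rm n g (k,False)" using eq by auto
        then show ?thesis using True by (auto simp: Rm_def prod_eq_iff)
      next
        case False then show ?thesis using f g by (auto simp: PiE_dflt_def)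
      qed
    qed
  qed
  show "Rm n ` PiE_dflt {..<n} (False,False) (\<lambda>_. UNIV) = space (Kn n)"
  proof
    show "Rm n ` PiE_dflt {..<n} (False,False) (\<lambda>_. UNIV) \<subseteq> space (Kn n)"
      by (auto simp: space_Kn Rm_def)
    show "space (Kn n) \<subseteq> Rm n ` PiE_dflt {..<n} (False,False) (\<lambda>_. UNIV)"
    proof
      fix \<omega> assume w: "\<omega> \<in> space (Kn n)"
      define f where "f k = (if k < n then (\<omega> (k,True), \<omega> (k,False)) else (False,False))" for k
      have "Rm n f = \<omega>"
      proof
        fix kc show "Rm n f kc = \<omega> kc"
          using w by (cases kc) (auto simp: Rm_def f_def space_Kn PiE_def extensional_def)
      qed
      moreover have "f \<in> PiE_dflt {..<n} (False,False) (\<lambda>_. UNIV)" by (auto simp: PiE_dflt_def f_def)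
      ultimately show "\<omega> \<in> Rm n ` PiE_dflt {..<n} (False,False) (\<lambda>_. UNIV)" by blast
    qed
  qed
qed

lemma coins_event:
  assumes "\<And>s t. s < t \<Longrightarrow> t < w \<Longrightarrow> a s < a t \<and> b s < b t"
    and "\<And>t. t < w \<Longrightarrow> a t < n \<and> b t < n"
  shows "measure (coins_dist n) {\<omega> \<in> space (coins_dist n). G (\<lambda>t. if t < w then \<omega> (a t, True) \<noteq> \<omega> (b t, False) else False)}
    = measure_pmf.prob (Pi_pmf {..<w} False (\<lambda>t. bernoulli_pmf (rho a b t))) {z. G z}"
proof -
  define Q where "Q = Pi_pmf {..<n} (False,False) (\<lambda>_. pi2)"
  define D where "D = PiE_dflt {..<n} (False,False) (\<lambda>_. UNIV::(bool\<times>bool) set)"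
  define E where "E = {\<omega> \<in> space (Kn n). G (\<lambda>t. if t < w then \<omega> (a t, True) \<noteq> \<omega> (b t, False) else False)}"
  define B where "B = Tv a b w -` {z. G z}"
  have TvR: "Tv a b w f = (\<lambda>t. if t < w then Rm n f (a t, True) \<noteq> Rm n f (b t, False) else False)" for f
    using assms(2) by (auto simp: Tv_def Zt_def Rm_def fun_eq_iff)
  have finD: "finite D" unfolding D_def by (rule finite_PiE_dflt) auto
  have bij: "bij_betw (Rm n) (B \<inter> D) E"
  proof -
    have "bij_betw (Rm n) (D \<inter> B) (Rm n ` (D \<inter> B))"
      using bij_Rm[of n] unfolding D_def[symmetric] bij_betw_def by (auto intro: inj_on_subset)
    moreover have "Rm n ` (D \<inter> B) = E"
    proof -
      have "Rm n ` (D \<inter> B) = Rm n ` D \<inter> {\<omega>. G (\<lambda>t. if t < w then \<omega> (a t, True) \<noteq> \<omega> (b t, False) else False)}"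
        unfolding B_def by (auto simp: TvR)
      also have "Rm n ` D = space (Kn n)" using bij_Rm[of n] unfolding D_def bij_betw_def by simp
      finally show ?thesis unfolding E_def by auto
    qed
    ultimately show ?thesis by (simp add: Int_commute)
  qed
  have "measure (coins_dist n) {\<omega> \<in> space (coins_dist n). G (\<lambda>t. if t < w then \<omega> (a t, True) \<noteq> \<omega> (b t, False) else False)}
      = (\<Sum>\<omega>\<in>E. Wt n \<omega>)"
    unfolding space_coins E_def by (rule measure_coins) auto
  also have "\<dots> = (\<Sum>f\<in>B \<inter> D. Wt n (Rm n f))"
    by (rule sum.reindex_bij_betw[OF bij, symmetric])
  also have "\<dots> = (\<Sum>f\<in>B \<inter> D. pmf Q f)"
  proof (intro sum.cong refl)
    fix f assume f: "f \<in> B \<inter> D"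
    then have "pmf Q f = (\<Prod>k<n. pmf pi2 (f k))"
      unfolding Q_def by (intro pmf_Pi') (auto simp: D_def PiE_dflt_def)
    also have "\<dots> = Wt n (Rm n f)"
      unfolding Wt_def by (intro prod.cong refl) (auto simp: Rm_def pmf_pi2[symmetric])
    finally show "Wt n (Rm n f) = pmf Q f" by simp
  qed
  also have "\<dots> = measure_pmf.prob Q (B \<inter> D)"
    using finD by (simp add: measure_measure_pmf_finite)
  also have "\<dots> = measure_pmf.prob Q B"
  proof -
    have sQ: "set_pmf Q \<subseteq> D"
      unfolding Q_def D_def using set_Pi_pmf_subset[of "{..<n}" "(False,False)" "\<lambda>_. pi2"]
      by (auto simp: PiE_dflt_def)
    have "measure_pmf.prob Q (B \<inter> D) = measure_pmf.prob Q ((B \<inter> D) \<inter> set_pmf Q)"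
      by (rule measure_Int_set_pmf[symmetric])
    also have "(B \<inter> D) \<inter> set_pmf Q = B \<inter> set_pmf Q" using sQ by auto
    also have "measure_pmf.prob Q \<dots> = measure_pmf.prob Q B" by (rule measure_Int_set_pmf)
    finally show ?thesis .
  qed
  also have "\<dots> = measure_pmf.prob (map_pmf (Tv a b w) Q) {z. G z}"
    unfolding B_def by simp
  also have "\<dots> = measure_pmf.prob (Pi_pmf {..<w} False (\<lambda>t. bernoulli_pmf (rho a b t))) {z. G z}"
    unfolding Q_def using assms by (subst peel) auto
  finally show ?thesis .
qed

lemma trace_origin_mono:
  assumes "finite D" "m1 < m2" "m2 < card D"
  shows "trace_origin D m1 < trace_origin D m2"
proof -
  have "sorted_wrt (<) (sorted_list_of_set D)"
    by (simp add: strict_sorted_iff sorted_sorted_list_of_set distinct_sorted_list_of_set)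
  from sorted_wrt_nth_less[OF this, of m1 m2] show ?thesis unfolding trace_origin_def
    using assms by (simp add: length_sorted_list_of_set)
qed

lemma trace_origin_mem:
  assumes "finite D" "m < card D"
  shows "trace_origin D m \<in> D"
proof -
  have "sorted_list_of_set D ! m \<in> set (sorted_list_of_set D)"
    using assms by (intro nth_mem) (simp add: length_sorted_list_of_set)
  then show ?thesis using assms by (simp add: trace_origin_def set_sorted_list_of_set)
qed

theorem lemma6:
  fixes n w i j :: nat and Dx Dy :: "nat set" and \<beta> :: real
  assumes "Dx \<subseteq> {..<n}" and "Dy \<subseteq> {..<n}"
    and "i + w \<le> card Dx" and "j + w \<le> card Dy"
    and "\<beta> > 0"
  defines "q \<equiv> card {t \<in> {..<w}. trace_origin Dx (i + t) = trace_origin Dy (j + t)}"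
  defines "r \<equiv> w - q"
  shows "measure (coins_dist n)
           {\<omega> \<in> space (coins_dist n).
              \<bar>(\<Sum>t<w. \<bar>(of_bool (\<omega> (trace_origin Dx (i + t), True)) :: real)
                        - of_bool (\<omega> (trace_origin Dy (j + t), False))\<bar>)
               - (real q / 3 + real r / 2)\<bar> \<ge> \<beta>}
         \<le> 2 * exp (- 2 * \<beta>^2 / real w)"
proof (cases "w = 0")
  case True
  then show ?thesis using assms(5) by (simp add: q_def r_def)
next
  case False
  then have w: "w > 0" by simp
  define a where "a t = trace_origin Dx (i + t)" for t
  define b where "b t = trace_origin Dy (j + t)" for t
  have finx: "finite Dx" using assms(1) finite_subset by blast
  have finy: "finite Dy" using assms(2) finite_subset by blast
  have mono: "a s < a t \<and> b s < b t" if "s < t" "t < w" for s t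
    unfolding a_def b_def using that assms(3,4) finx finy
    by (intro conjI trace_origin_mono) auto
  have bnd: "a t < n \<and> b t < n" if "t < w" for t
  proof -
    have "a t \<in> Dx" "b t \<in> Dy"
      unfolding a_def b_def using that assms(3,4) finx finy by (auto intro!: trace_origin_mem)
    then show ?thesis using assms(1,2) by auto
  qed
  have rho_nn: "0 \<le> rho a b t \<and> rho a b t \<le> 1" for t by (simp add: rho_def)
  have mu: "real q / 3 + real r / 2 = (\<Sum>t<w. rho a b t)"
  proof -
    have "(\<Sum>t<w. rho a b t) = (\<Sum>t\<in>{..<w} \<inter> {t. a t = b t}. 1/3) + (\<Sum>t\<in>{..<w} \<inter> - {t. a t = b t}. 1/2)"
      unfolding rho_def by (rule sum.If_cases) simp
    also have "\<dots> = real (card ({..<w} \<inter> {t. a t = b t})) / 3 + real (card ({..<w} \<inter> - {t. a t = b t})) / 2"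
      by simp
    also have "card ({..<w} \<inter> {t. a t = b t}) = q"
      unfolding q_def a_def b_def by (rule arg_cong[where f=card]) auto
    also have "card ({..<w} \<inter> - {t. a t = b t}) = r"
    proof -
      have "card ({..<w} \<inter> {t. a t = b t}) + card ({..<w} \<inter> - {t. a t = b t}) = card {..<w::nat}"
      proof -
        have U: "({..<w} \<inter> {t. a t = b t}) \<union> ({..<w} \<inter> - {t. a t = b t}) = {..<w::nat}" by auto
        have "card ({..<w} \<inter> {t. a t = b t}) + card ({..<w} \<inter> - {t. a t = b t})
            = card (({..<w} \<inter> {t. a t = b t}) \<union> ({..<w} \<inter> - {t. a t = b t}))"
          by (rule card_Un_disjoint[symmetric]) auto
        then show ?thesis by (simp only: U)
      qed
      moreover have "card ({..<w} \<inter> {t. a t = b t}) = q"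
        unfolding q_def a_def b_def by (rule arg_cong[where f=card]) auto
      ultimately show ?thesis unfolding r_def by simp
    qed
    finally show ?thesis by simp
  qed
  define G where "G z \<longleftrightarrow> \<beta> \<le> \<bar>(\<Sum>t<w. of_bool (z t) :: real) - (\<Sum>t<w. rho a b t)\<bar>" for z
  have absb: "\<bar>(of_bool x :: real) - of_bool y\<bar> = of_bool (x \<noteq> y)" for x y by (cases x; cases y) auto
  have ev: "{\<omega> \<in> space (coins_dist n).
              \<bar>(\<Sum>t<w. \<bar>(of_bool (\<omega> (trace_origin Dx (i + t), True)) :: real)
                        - of_bool (\<omega> (trace_origin Dy (j + t), False))\<bar>)
               - (real q / 3 + real r / 2)\<bar> \<ge> \<beta>}
     = {\<omega> \<in> space (coins_dist n). G (\<lambda>t. if t < w then \<omega> (a t, True) \<noteq> \<omega> (b t, False) else False)}"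
  proof -
    have "(\<Sum>t<w. \<bar>(of_bool (\<omega> (trace_origin Dx (i + t), True)) :: real)
                        - of_bool (\<omega> (trace_origin Dy (j + t), False))\<bar>)
        = (\<Sum>t<w. of_bool ((\<lambda>t. if t < w then \<omega> (a t, True) \<noteq> \<omega> (b t, False) else False) t))" for \<omega>
      by (intro sum.cong refl) (simp add: absb a_def b_def)
    then show ?thesis unfolding G_def mu by simp
  qed
  have "measure (coins_dist n) {\<omega> \<in> space (coins_dist n). G (\<lambda>t. if t < w then \<omega> (a t, True) \<noteq> \<omega> (b t, False) else False)}
      = measure_pmf.prob (Pi_pmf {..<w} False (\<lambda>t. bernoulli_pmf (rho a b t))) {z. G z}"
    using mono bnd by (rule coins_event)
  also have "\<dots> \<le> 2 * exp (- 2 * \<beta>^2 / real w)"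
    unfolding G_def using hoeff_pi[OF w _ rho_nn, of \<beta>] assms(5) by simp
  finally show ?thesis unfolding ev .
qed

end
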